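(* Let $G=(\mathbb V,\mathbb E,w)$ be a connected undirected graph with $n\ge2$ vertices and nonnegative weights, $\epsilon\in(0,2)$, $\delta\in(0,1/e]$, $\gamma\in(0,1)$, and run Algorithm A (see context), producing $\mathbb V_1$, $\mathbb E_0$, $\mathbb E_1$ and $w'$. For each pair $u,v\in\mathbb V$ fix (depending only on $G$ and $w$) a shortest path $P_{u,v}$ in $G$, and let $P^{\mathbb V_1}_{u,v}$ be the corresponding canonical shortest path. Then there is a universal constant $C>0$ such that, with probability at least $1-4\gamma$, for all $u,v\in\mathbb V$, $$\Big|\sum_{e\in P^{\mathbb V_1}_{u,v}}\big(w'(e)-\bar w(e)\big)\Big|\le C\,n^{1/2}\sqrt{\log(1/\delta)}\,\log^2(n/\gamma)/\epsilon .$$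
   Context: $Lap(\mu,\sigma)$: Laplace distribution with location $\mu$, scale $\sigma$, density $\frac{1}{2\sigma}e^{-|x-\mu|/\sigma}$. $d_G(u,v)$: shortest-path distance in $G$. Algorithm A (input $G=(\mathbb V,\mathbb E,w)$, $n=|\mathbb V|$ with $n^{1/2}$ an integer, parameters $\epsilon,\delta,\gamma$): set $\epsilon'=\epsilon/2$; choose $\mathbb V_1\subseteq\mathbb V$ uniformly at random among subsets of size $n^{1/2}$; let $\mathbb E_1=\{\{u,v\}:u,v\in\mathbb V_1,u\neq v\}$ and $\mathbb E_0=\mathbb E\setminus\mathbb E_1$; for $e=\{u,v\}\in\mathbb E_1$ set $w'(e)=d_G(u,v)+X_e$, $X_e\sim Lap(\mu_1,\sigma_1)$ with $\sigma_1=2\sqrt2\,n^{1/2}\sqrt{\log(1/\delta)}/\epsilon'$, $\mu_1=\sigma_1\log(n/\gamma)$; for $e\in\mathbb E_0$ set $w'(e)=w(e)+X_e$, $X_e\sim Lap(\mu_0,\sigma_0)$ with $\sigma_0=1/\epsilon'$, $\mu_0=\sigma_0\log(n^2/\gamma)$; all noises independent; output $G'=(\mathbb V,\mathbb E_0\cup\mathbb E_1,w')$. Define $\bar w(e)=w(e)$ for $e\in\mathbb E_0$ and $\bar w(\{u,v\})=d_G(u,v)$ for $\{u,v\}\in\mathbb E_1$ (so $w'(e)-\bar w(e)=X_e$). Canonical shortest path: given the fixed shortest path $P_{u,v}=(u=x_0,x_1,\dots,x_L=v)$ in $G$, if $P_{u,v}$ contains at most one vertex of $\mathbb V_1$ then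 $P^{\mathbb V_1}_{u,v}=P_{u,v}$; otherwise let $p$ be the first and $q$ the last vertex of $P_{u,v}$ (traversed from $u$ to $v$) lying in $\mathbb V_1$, and let $P^{\mathbb V_1}_{u,v}$ be the path in $G'$ consisting of the subpath of $P_{u,v}$ from $u$ to $p$, the edge $\{p,q\}\in\mathbb E_1$, and the subpath of $P_{u,v}$ from $q$ to $v$. Edges of $P_{u,v}$ with both endpoints in $\mathbb V_1$ are regarded as the corresponding $\mathbb E_1$ edges. *)

theory Defs
  imports "HOL-Probability.Probability"
begin

definition simple_graph :: "'a set \<Rightarrow> 'a set set \<Rightarrow> bool" where
  "simple_graph V E \<longleftrightarrow> finite V \<and> (\<forall>e\<in>E. e \<subseteq> V \<and> card e = 2)"

definition path_edges :: "'a list \<Rightarrow> 'a set list" where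
  "path_edges xs = map (\<lambda>(a, b). {a, b}) (zip xs (tl xs))"

definition is_path :: "'a set \<Rightarrow> 'a set set \<Rightarrow> 'a list \<Rightarrow> 'a \<Rightarrow> 'a \<Rightarrow> bool" where
  "is_path V E xs u v \<longleftrightarrow> xs \<noteq> [] \<and> hd xs = u \<and> last xs = v \<and> distinct xs
     \<and> set xs \<subseteq> V \<and> (\<forall>e\<in>set (path_edges xs). e \<in> E)"

definition path_weight :: "('a set \<Rightarrow> real) \<Rightarrow> 'a list \<Rightarrow> real" where
  "path_weight w xs = sum_list (map w (path_edges xs))"

definition connected_graph :: "'a set \<Rightarrow> 'a set set \<Rightarrow> bool" where
  "connected_graph V E \<longleftrightarrow> (\<forall>u\<in>V. \<forall>v\<in>V. \<exists>xs. is_path V E xs u v)"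

definition dist_G :: "'a set \<Rightarrow> 'a set set \<Rightarrow> ('a set \<Rightarrow> real) \<Rightarrow> 'a \<Rightarrow> 'a \<Rightarrow> real" where
  "dist_G V E w u v = Inf {path_weight w xs | xs. is_path V E xs u v}"

definition is_shortest_path ::
  "'a set \<Rightarrow> 'a set set \<Rightarrow> ('a set \<Rightarrow> real) \<Rightarrow> 'a list \<Rightarrow> 'a \<Rightarrow> 'a \<Rightarrow> bool" where
  "is_shortest_path V E w xs u v \<longleftrightarrow>
     is_path V E xs u v \<and> path_weight w xs = dist_G V E w u v"

text \<open>n^(1/2) (an integer by assumption).\<close>
definition isqrt :: "nat \<Rightarrow> nat" where
  "isqrt n = nat \<lfloor>sqrt (real n)\<rfloor>"

definition E1_of :: "'a set \<Rightarrow> 'a set set" where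
  "E1_of V1 = {{u, v} | u v. u \<in> V1 \<and> v \<in> V1 \<and> u \<noteq> v}"

definition E0_of :: "'a set set \<Rightarrow> 'a set \<Rightarrow> 'a set set" where
  "E0_of E V1 = E - E1_of V1"

definition laplace_density :: "real \<Rightarrow> real \<Rightarrow> real \<Rightarrow> real" where
  "laplace_density \<mu> \<sigma> x = exp (- \<bar>x - \<mu>\<bar> / \<sigma>) / (2 * \<sigma>)"

definition Lap :: "real \<Rightarrow> real \<Rightarrow> real measure" where
  "Lap \<mu> \<sigma> = density lborel (\<lambda>x. ennreal (laplace_density \<mu> \<sigma> x))"

definition sigma1 :: "nat \<Rightarrow> real \<Rightarrow> real \<Rightarrow> real" where
  "sigma1 n \<epsilon> \<delta> = 2 * sqrt 2 * sqrt (real n) * sqrt (ln (1 / \<delta>)) / (\<epsilon> / 2)"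

definition mu1 :: "nat \<Rightarrow> real \<Rightarrow> real \<Rightarrow> real \<Rightarrow> real" where
  "mu1 n \<epsilon> \<delta> \<gamma> = sigma1 n \<epsilon> \<delta> * ln (real n / \<gamma>)"

definition sigma0 :: "real \<Rightarrow> real" where
  "sigma0 \<epsilon> = 1 / (\<epsilon> / 2)"

definition mu0 :: "nat \<Rightarrow> real \<Rightarrow> real \<Rightarrow> real" where
  "mu0 n \<epsilon> \<gamma> = sigma0 \<epsilon> * ln (real n ^ 2 / \<gamma>)"

definition noise_measure ::
  "'a set \<Rightarrow> 'a set set \<Rightarrow> real \<Rightarrow> real \<Rightarrow> real \<Rightarrow> 'a set \<Rightarrow> ('a set \<Rightarrow> real) measure" where
  "noise_measure V E \<epsilon> \<delta> \<gamma> V1 =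
     (\<Pi>\<^sub>M e\<in>E0_of E V1 \<union> E1_of V1.
        if e \<in> E1_of V1 then Lap (mu1 (card V) \<epsilon> \<delta> \<gamma>) (sigma1 (card V) \<epsilon> \<delta>)
        else Lap (mu0 (card V) \<epsilon> \<gamma>) (sigma0 \<epsilon>))"

definition edge_dist :: "'a set \<Rightarrow> 'a set set \<Rightarrow> ('a set \<Rightarrow> real) \<Rightarrow> 'a set \<Rightarrow> real" where
  "edge_dist V E w e = (THE d. \<exists>u v. e = {u, v} \<and> d = dist_G V E w u v)"

definition w_out ::
  "'a set \<Rightarrow> 'a set set \<Rightarrow> ('a set \<Rightarrow> real) \<Rightarrow> 'a set \<Rightarrow> ('a set \<Rightarrow> real) \<Rightarrow> 'a set \<Rightarrow> real" where
  "w_out V E w V1 X e =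
     (if e \<in> E1_of V1 then edge_dist V E w e + X e else w e + X e)"

definition w_bar :: "'a set \<Rightarrow> 'a set set \<Rightarrow> ('a set \<Rightarrow> real) \<Rightarrow> 'a set \<Rightarrow> 'a set \<Rightarrow> real" where
  "w_bar V E w V1 e = (if e \<in> E1_of V1 then edge_dist V E w e else w e)"

text \<open>Given a vertex sequence P = (x0..xL): if at most one vertex lies in V1, keep P;
  otherwise, with p = x_i the first and q = x_j the last vertex in V1, return
  (x0..x_i, x_j..xL), i.e. the subpath to p, the edge {p,q}, the subpath from q.\<close>
definition canonical_path :: "'a set \<Rightarrow> 'a list \<Rightarrow> 'a list" where
  "canonical_path V1 P =
     (let I = filter (\<lambda>i. P ! i \<in> V1) [0..<length P]
      in if length I \<le> 1 then P else take (hd I + 1) P @ drop (last I) P)"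

end

theory Submission
  imports Defs "HOL-Real_Asymp.Real_Asymp"
begin


lemma laplace_density_borel[measurable]: "laplace_density \<mu> \<sigma> \<in> borel_measurable borel"
  unfolding laplace_density_def by measurable

lemma Lap_atLeast:
  assumes s: "\<sigma> > 0" and a: "\<mu> \<le> a"
  shows "emeasure (Lap \<mu> \<sigma>) {a..} = ennreal (exp (-(a-\<mu>)/\<sigma>)/2)"
proof -
  have "emeasure (Lap \<mu> \<sigma>) {a..} = (\<integral>\<^sup>+x. ennreal (laplace_density \<mu> \<sigma> x) * indicator {a..} x \<partial>lborel)"
    unfolding Lap_def by (subst emeasure_density) auto
  also have "\<dots> = ennreal (0 - (- exp (-(a-\<mu>)/\<sigma>)/2))"
  proof (rule nn_integral_FTC_atLeast[where F="\<lambda>x. - exp (-(x-\<mu>)/\<sigma>)/2"])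
    show "laplace_density \<mu> \<sigma> \<in> borel_measurable borel" by measurable
    fix x assume x: "a \<le> x"
    have "DERIV (\<lambda>x. - exp (-(x-\<mu>)/\<sigma>)/2) x :> - (exp (-(x-\<mu>)/\<sigma>) * (-1/\<sigma>))/2"
      using s by (auto intro!: derivative_eq_intros)
    moreover have "- (exp (-(x-\<mu>)/\<sigma>) * (-1/\<sigma>))/2 = laplace_density \<mu> \<sigma> x"
      using x a s by (simp add: laplace_density_def abs_of_nonneg field_simps)
    ultimately show "DERIV (\<lambda>x. - exp (-(x-\<mu>)/\<sigma>)/2) x :> laplace_density \<mu> \<sigma> x" by simp
    show "0 \<le> laplace_density \<mu> \<sigma> x" using s by (simp add: laplace_density_def)
  next
    show "((\<lambda>x. - exp (-(x-\<mu>)/\<sigma>)/2) \<longlongrightarrow> 0) at_top"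
      using s by real_asymp
  qed
  finally show ?thesis by simp
qed

lemma Lap_atMost:
  assumes s: "\<sigma> > 0" and a: "b \<le> \<mu>"
  shows "emeasure (Lap \<mu> \<sigma>) {..b} = ennreal (exp (-(\<mu>-b)/\<sigma>)/2)"
proof -
  have "emeasure (Lap \<mu> \<sigma>) {..b} = (\<integral>\<^sup>+x. ennreal (laplace_density \<mu> \<sigma> x) * indicator {..b} x \<partial>lborel)"
    unfolding Lap_def by (subst emeasure_density) auto
  also have "\<dots> = (\<integral>\<^sup>+x. ennreal (laplace_density (-\<mu>) \<sigma> x) * indicator {-b..} x \<partial>lborel)"
    apply (subst nn_integral_real_affine[where c="-1" and t=0])
      apply measurable
    apply simp
    apply (intro nn_integral_cong)
    apply (auto simp: laplace_density_def indicator_def abs_minus_commute)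
    apply (simp add: add.commute)
    done
  also have "\<dots> = emeasure (Lap (-\<mu>) \<sigma>) {-b..}"
    unfolding Lap_def by (subst emeasure_density) auto
  also have "\<dots> = ennreal (exp (-(\<mu>-b)/\<sigma>)/2)"
    using Lap_atLeast[OF s, of "-\<mu>" "-b"] a by simp
  finally show ?thesis .
qed

lemma space_Lap[simp]: "space (Lap \<mu> \<sigma>) = UNIV" unfolding Lap_def by simp
lemma sets_Lap[simp, measurable_cong]: "sets (Lap \<mu> \<sigma>) = sets borel" unfolding Lap_def by simp

lemma inv2: "(inverse 2 + inverse 2 :: ennreal) = 1"
proof -
  have "ennreal (1/2) + ennreal (1/2) = ennreal 1" by (simp only: ennreal_plus[symmetric]) simp
  then show ?thesis by (simp only: ennreal_half ennreal_1)
qed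

lemma Lap_singleton:
  "emeasure (Lap \<mu> \<sigma>) {x} = 0"
  unfolding Lap_def by (subst emeasure_density) auto

lemma prob_space_Lap:
  assumes s: "\<sigma> > 0" shows "prob_space (Lap \<mu> \<sigma>)"
proof
  have 1: "emeasure (Lap \<mu> \<sigma>) {..\<mu>} + emeasure (Lap \<mu> \<sigma>) {\<mu><..} = emeasure (Lap \<mu> \<sigma>) ({..\<mu>} \<union> {\<mu><..})"
    by (rule plus_emeasure) auto
  have 2: "emeasure (Lap \<mu> \<sigma>) {\<mu>} + emeasure (Lap \<mu> \<sigma>) {\<mu><..} = emeasure (Lap \<mu> \<sigma>) ({\<mu>} \<union> {\<mu><..})"
    by (rule plus_emeasure) auto
  have u1: "{..\<mu>} \<union> {\<mu><..} = space (Lap \<mu> \<sigma>)" by auto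
  have u2: "{\<mu>} \<union> {\<mu><..} = {\<mu>..}" by auto
  from 2 u2 have "emeasure (Lap \<mu> \<sigma>) {\<mu><..} = emeasure (Lap \<mu> \<sigma>) {\<mu>..}"
    by (simp only: Lap_singleton add_0_left)
  with 1 u1 show "emeasure (Lap \<mu> \<sigma>) (space (Lap \<mu> \<sigma>)) = 1"
    using Lap_atLeast[OF s order_refl, of \<mu>] Lap_atMost[OF s order_refl, of \<mu>]
    by (simp del: space_Lap add: inv2)
qed

lemma Lap_tail:
  assumes s: "\<sigma> > 0" and m: "\<mu> \<ge> 0"
  shows "measure (Lap \<mu> \<sigma>) (UNIV - {0..2*\<mu>}) \<le> exp (-\<mu>/\<sigma>)"
proof -
  interpret prob_space "Lap \<mu> \<sigma>" by (rule prob_space_Lap[OF s])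
  have "UNIV - {0..2*\<mu>} \<subseteq> {..0} \<union> {2*\<mu>..}" by auto
  then have "measure (Lap \<mu> \<sigma>) (UNIV - {0..2*\<mu>}) \<le> measure (Lap \<mu> \<sigma>) ({..0} \<union> {2*\<mu>..})"
    by (intro finite_measure_mono) auto
  also have "\<dots> \<le> measure (Lap \<mu> \<sigma>) {..0} + measure (Lap \<mu> \<sigma>) {2*\<mu>..}"
    by (intro measure_Un_le) auto
  also have "measure (Lap \<mu> \<sigma>) {..0} = exp (-\<mu>/\<sigma>)/2"
    using Lap_atMost[OF s, of 0 \<mu>] m unfolding measure_def by simp
  also have "measure (Lap \<mu> \<sigma>) {2*\<mu>..} = exp (-\<mu>/\<sigma>)/2"
    using Lap_atLeast[OF s, of \<mu> "2*\<mu>"] m unfolding measure_def by simp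
  finally show ?thesis by simp
qed

lemma noise_bad:
  fixes I :: "'b set" and mu sg :: "'b \<Rightarrow> real"
  assumes I: "finite I" and s: "\<And>e. e \<in> I \<Longrightarrow> sg e > 0" and m: "\<And>e. e \<in> I \<Longrightarrow> mu e \<ge> 0"
  shows "measure (PiM I (\<lambda>e. Lap (mu e) (sg e))) {X \<in> space (PiM I (\<lambda>e. Lap (mu e) (sg e))). \<exists>e\<in>I. X e \<notin> {0..2 * mu e}}
     \<le> (\<Sum>e\<in>I. exp (- mu e / sg e))"
proof -
  let ?M = "PiM I (\<lambda>e. Lap (mu e) (sg e))"
  have ps: "\<And>e. e \<in> I \<Longrightarrow> prob_space (Lap (mu e) (sg e))" using s prob_space_Lap by blast
  interpret P: prob_space ?M by (rule prob_space_PiM[OF ps])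
  have eq: "{X \<in> space ?M. \<exists>e\<in>I. X e \<notin> {0..2 * mu e}} = (\<Union>e\<in>I. {X \<in> space ?M. X e \<in> UNIV - {0..2 * mu e}})"
    by auto
  have "measure ?M {X \<in> space ?M. \<exists>e\<in>I. X e \<notin> {0..2 * mu e}} \<le> (\<Sum>e\<in>I. measure ?M {X \<in> space ?M. X e \<in> UNIV - {0..2 * mu e}})"
    unfolding eq by (rule P.finite_measure_subadditive_finite[OF I]) auto
  also have "\<dots> \<le> (\<Sum>e\<in>I. exp (- mu e / sg e))"
  proof (rule sum_mono)
    fix e assume e: "e \<in> I"
    have "measure ?M {X \<in> space ?M. X e \<in> UNIV - {0..2 * mu e}} = measure (distr ?M (Lap (mu e) (sg e)) (\<lambda>X. X e)) (UNIV - {0..2 * mu e})"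
      by (subst measure_distr) (auto intro!: measurable_component_singleton e simp: vimage_def Int_def conj_commute)
    also have "\<dots> = measure (Lap (mu e) (sg e)) (UNIV - {0..2 * mu e})"
      using distr_PiM_component[of I "\<lambda>e. Lap (mu e) (sg e)" e] ps e by simp
    also have "\<dots> \<le> exp (- mu e / sg e)" by (rule Lap_tail[OF s[OF e] m[OF e]])
    finally show "measure ?M {X \<in> space ?M. X e \<in> UNIV - {0..2 * mu e}} \<le> exp (- mu e / sg e)" .
  qed
  finally show ?thesis .
qed



lemma binom_ratio:
  assumes kn: "k \<le> n" and n: "0 < n"
  shows "real ((n - m) choose k) \<le> (1 - real k / real n)^m * real (n choose k)"
proof (induction m)
  case 0 then show ?case by simp
next
  case (Suc m)
  have q: "0 \<le> 1 - real k / real n" using kn n by (simp add: field_simps)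
  show ?case
  proof (cases "k = 0")
    case True then show ?thesis by simp
  next
    case k: False
    define a where "a = n - m"
    have nsm: "n - Suc m = a - 1" unfolding a_def by simp
    show ?thesis
    proof (cases "k \<le> a - 1")
      case False
      then have "(a - 1) choose k = 0" by simp
      then show ?thesis unfolding nsm using q by (simp del: binomial_eq_0_iff)
    next
      case True
      then have a0: "a > 0" "k < a" using k by auto
      have "(a - k) * (a choose k) = a * ((a - 1) choose k)" by (rule binomial_absorb_comp)
      then have "real (a - k) * real (a choose k) = real a * real ((a - 1) choose k)"
        by (metis of_nat_mult)
      then have eq: "real ((a - 1) choose k) = (1 - real k / real a) * real (a choose k)"
        using a0 by (simp add: field_simps of_nat_diff)
      have "a \<le> n" unfolding a_def by simp
      then have "1 - real k / real a \<le> 1 - real k / real n"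
        using a0 by (simp add: frac_le)
      then have "real ((a - 1) choose k) \<le> (1 - real k / real n) * real (a choose k)"
        unfolding eq by (intro mult_right_mono) auto
      also have "\<dots> \<le> (1 - real k / real n) * ((1 - real k / real n)^m * real (n choose k))"
        using Suc.IH q unfolding a_def by (intro mult_left_mono) auto
      finally show ?thesis unfolding nsm by simp
    qed
  qed
qed

definition goodV :: "nat set \<Rightarrow> (nat \<Rightarrow> nat \<Rightarrow> nat list) \<Rightarrow> nat \<Rightarrow> nat set \<Rightarrow> bool" where
  "goodV V P m V1 \<longleftrightarrow> (\<forall>u\<in>V. \<forall>v\<in>V. \<forall>s. s + m \<le> length (P u v) \<longrightarrow> (\<exists>t. s \<le> t \<and> t < s + m \<and> P u v ! t \<in> V1))"

lemma count_bad:
  assumes V: "finite V" and PV: "\<And>u v. u \<in> V \<Longrightarrow> v \<in> V \<Longrightarrow> distinct (P u v) \<and> set (P u v) \<subseteq> V"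
    and m: "m \<ge> 1"
  shows "card {V1. (V1 \<subseteq> V \<and> card V1 = k) \<and> \<not> goodV V P m V1} \<le> card V ^ 3 * ((card V - m) choose k)"
proof -
  define n where "n = card V"
  define T where "T = (\<lambda>(u, v, s). {V1. V1 \<subseteq> V \<and> card V1 = k \<and> s + m \<le> length (P u v) \<and> V1 \<inter> (nth (P u v)) ` {s..<s+m} = {}})"
  have len: "length (P u v) \<le> n" if "u \<in> V" "v \<in> V" for u v
  proof -
    have "length (P u v) = card (set (P u v))" using PV[OF that] by (simp add: distinct_card)
    also have "\<dots> \<le> n" unfolding n_def using PV[OF that] V by (intro card_mono) auto
    finally show ?thesis .
  qed
  have sub: "{V1. (V1 \<subseteq> V \<and> card V1 = k) \<and> \<not> goodV V P m V1} \<subseteq> (\<Union>x\<in>V \<times> V \<times> {..<n}. T x)"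
  proof
    fix V1 assume "V1 \<in> {V1. (V1 \<subseteq> V \<and> card V1 = k) \<and> \<not> goodV V P m V1}"
    then have V1: "V1 \<subseteq> V" "card V1 = k" and ng: "\<not> goodV V P m V1" by auto
    from ng obtain u v s where uv: "u \<in> V" "v \<in> V" and sm: "s + m \<le> length (P u v)"
      and no: "\<And>t. s \<le> t \<Longrightarrow> t < s + m \<Longrightarrow> P u v ! t \<notin> V1"
      unfolding goodV_def by blast
    have "s < n" using sm len[OF uv] m by simp
    moreover have "V1 \<in> T (u, v, s)" using V1 sm no unfolding T_def by auto
    ultimately show "V1 \<in> (\<Union>x\<in>V \<times> V \<times> {..<n}. T x)" using uv by blast
  qed
  have cT: "card (T x) \<le> (n - m) choose k" if x: "x \<in> V \<times> V \<times> {..<n}" for x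
  proof -
    obtain u v s where xe: "x = (u, v, s)" by (cases x) auto
    with x have uv: "u \<in> V" "v \<in> V" by auto
    show ?thesis
    proof (cases "s + m \<le> length (P u v)")
      case False
      then have "T x = {}" unfolding T_def xe by auto
      then show ?thesis by simp
    next
      case True
      define S where "S = (nth (P u v)) ` {s..<s+m}"
      have SV: "S \<subseteq> V" unfolding S_def using PV[OF uv] True by (auto intro!: nth_mem)
      have cS: "card S = m" unfolding S_def
        by (subst card_image) (use PV[OF uv] True in \<open>auto intro!: inj_on_nth\<close>)
      have "T x = {V1. V1 \<subseteq> V - S \<and> card V1 = k}"
        unfolding T_def xe using True by (auto simp: S_def)
      also have "card \<dots> = card (V - S) choose k" by (rule n_subsets) (use V in auto)
      also have "card (V - S) = n - m" unfolding n_def using SV cS V by (simp add: card_Diff_subset finite_subset)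
      finally show ?thesis by simp
    qed
  qed
  have "card {V1. (V1 \<subseteq> V \<and> card V1 = k) \<and> \<not> goodV V P m V1} \<le> card (\<Union>x\<in>V \<times> V \<times> {..<n}. T x)"
    by (rule card_mono[OF _ sub]) (auto simp: T_def V)
  also have "\<dots> \<le> (\<Sum>x\<in>V \<times> V \<times> {..<n}. card (T x))" by (rule card_UN_le) (use V in auto)
  also have "\<dots> \<le> card (V \<times> V \<times> {..<n}) * ((n - m) choose k)" using sum_bounded_above[of "V \<times> V \<times> {..<n}" "\<lambda>x. card (T x)", OF cT] by simp
  also have "card (V \<times> V \<times> {..<n}) = n ^ 3" unfolding n_def by (simp add: card_cartesian_product power3_eq_cube)
  finally show ?thesis unfolding n_def .
qed



lemma length_path_edges[simp]: "length (path_edges xs) = length xs - 1"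
  unfolding path_edges_def by simp

lemma nth_path_edges: "t < length xs - 1 \<Longrightarrow> path_edges xs ! t = {xs ! t, xs ! Suc t}"
  unfolding path_edges_def by (simp add: nth_tl)

lemma edge_in_path: "t < length xs - 1 \<Longrightarrow> {xs ! t, xs ! Suc t} \<in> set (path_edges xs)"
  using nth_mem[of t "path_edges xs"] nth_path_edges[of t xs] by simp

lemma sum_path_edges: "sum_list (map X (path_edges xs)) = (\<Sum>t<length xs - 1. X {xs ! t, xs ! Suc t})"
proof -
  have "sum_list (map X (path_edges xs)) = (\<Sum>t\<in>{0..<length (map X (path_edges xs))}. map X (path_edges xs) ! t)"
    by (rule sum_list_sum_nth)
  also have "\<dots> = (\<Sum>t<length xs - 1. X {xs ! t, xs ! Suc t})"
    by (rule sum.cong) (auto simp: nth_path_edges)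
  finally show ?thesis .
qed

lemma E1_mem': "e \<in> E1_of V1 \<Longrightarrow> x \<in> e \<Longrightarrow> x \<in> V1"
proof -
  assume "e \<in> E1_of V1" "x \<in> e"
  then obtain u v where "e = {u, v}" "u \<in> V1" "v \<in> V1" unfolding E1_of_def by blast
  with \<open>x \<in> e\<close> show ?thesis by blast
qed

lemma notE1: "x \<notin> V1 \<Longrightarrow> {x, y} \<notin> E1_of V1 \<and> {y, x} \<notin> E1_of V1"
  using E1_mem'[of "{x, y}" V1 x] E1_mem'[of "{y, x}" V1 x] by blast

lemma inE1: "p \<in> V1 \<Longrightarrow> q \<in> V1 \<Longrightarrow> p \<noteq> q \<Longrightarrow> {p, q} \<in> E1_of V1"
  unfolding E1_of_def by blast

lemma E1_mem: "{x, y} \<in> E1_of V1 \<Longrightarrow> x \<in> V1 \<and> y \<in> V1"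
proof -
  assume h: "{x, y} \<in> E1_of V1"
  have "x \<in> V1" by (rule E1_mem'[OF h]) simp
  moreover have "y \<in> V1" by (rule E1_mem'[OF h]) simp
  ultimately show ?thesis ..
qed

lemma block:
  assumes blk: "\<forall>s. s + m \<le> length xs \<longrightarrow> (\<exists>t. s \<le> t \<and> t < s + m \<and> xs ! t \<in> V1)"
    and no: "\<And>t. lo \<le> t \<Longrightarrow> t < hi \<Longrightarrow> xs ! t \<notin> V1" and hi: "hi \<le> length xs"
  shows "hi < lo + m"
proof (rule ccontr)
  assume "\<not> hi < lo + m"
  then have "lo + m \<le> length xs" using hi by simp
  with blk obtain t where "lo \<le> t" "t < lo + m" "xs ! t \<in> V1" by blast
  with no[of t] \<open>\<not> hi < lo + m\<close> show False by simp
qed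

lemma sum_bound_gen:
  fixes g :: "nat \<Rightarrow> real"
  assumes "\<And>t. t < L \<Longrightarrow> 0 \<le> g t \<and> g t \<le> a + (if t = i then b else 0)" and "0 \<le> b"
  shows "0 \<le> (\<Sum>t<L. g t) \<and> (\<Sum>t<L. g t) \<le> real L * a + b"
proof
  show "0 \<le> (\<Sum>t<L. g t)" using assms by (intro sum_nonneg) auto
  have "(\<Sum>t<L. g t) \<le> (\<Sum>t<L. a + (if t = i then b else 0))" using assms by (intro sum_mono) auto
  also have "\<dots> = real L * a + (if i < L then b else 0)" by (simp add: sum.distrib)
  also have "\<dots> \<le> real L * a + b" using assms by auto
  finally show "(\<Sum>t<L. g t) \<le> real L * a + b" .
qed

lemma path_sum_bound:
  fixes xs :: "nat list" and X :: "nat set \<Rightarrow> real"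
  assumes dist: "distinct xs"
    and edges: "\<forall>e\<in>set (path_edges xs). e \<in> E"
    and H0: "\<And>e. e \<in> E \<Longrightarrow> e \<notin> E1_of V1 \<Longrightarrow> 0 \<le> X e \<and> X e \<le> a"
    and H1: "\<And>e. e \<in> E1_of V1 \<Longrightarrow> 0 \<le> X e \<and> X e \<le> b"
    and blk: "\<forall>s. s + m \<le> length xs \<longrightarrow> (\<exists>t. s \<le> t \<and> t < s + m \<and> xs ! t \<in> V1)"
    and a: "0 \<le> a" and b: "0 \<le> b"
  shows "0 \<le> sum_list (map X (path_edges (canonical_path V1 xs)))
     \<and> sum_list (map X (path_edges (canonical_path V1 xs))) \<le> 2 * real m * a + b"
proof -
  define n where "n = length xs"
  define I where "I = filter (\<lambda>i. xs ! i \<in> V1) [0..<n]"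
  have setI: "set I = {t. t < n \<and> xs ! t \<in> V1}" unfolding I_def by auto
  have dI: "distinct I" unfolding I_def by simp
  have sI: "sorted_wrt (<) I" unfolding I_def by (intro sorted_wrt_filter) simp
  have edgeE: "{xs ! t, xs ! Suc t} \<in> E" if "t < n - 1" for t
    using edges edge_in_path[of t xs] that unfolding n_def by auto
  show ?thesis
  proof (cases "length I \<le> 1")
    case True
    then have cp: "canonical_path V1 xs = xs" unfolding canonical_path_def I_def n_def by (simp add: Let_def)
    obtain i where iI: "\<And>t. t < n \<Longrightarrow> xs ! t \<in> V1 \<Longrightarrow> t = i"
    proof (cases I)
      case Nil then show ?thesis using that setI by auto
    next
      case (Cons i r) then have "r = []" using True by simp
      then show ?thesis using that[of i] setI Cons by auto
    qed
    have g: "0 \<le> X {xs ! t, xs ! Suc t} \<and> X {xs ! t, xs ! Suc t} \<le> a + (if t = i then b else 0)" if t: "t < n - 1" for t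
    proof -
      have "{xs ! t, xs ! Suc t} \<notin> E1_of V1"
      proof
        assume "{xs ! t, xs ! Suc t} \<in> E1_of V1"
        then have "xs ! t \<in> V1 \<and> xs ! Suc t \<in> V1" by (rule E1_mem)
        then have "t = i" "Suc t = i" using iI t by auto
        then show False by simp
      qed
      then show ?thesis using H0[OF edgeE[OF t]] b by auto
    qed
    have nV: "xs ! t \<notin> V1" if "t < n" "t \<noteq> i" for t using iI that by blast
    have L: "n - 1 \<le> 2 * m"
    proof (cases "i < n")
      case True
      have 1: "i < 0 + m"
      proof (rule block[OF blk])
        fix t assume "0 \<le> t" "t < i" then show "xs ! t \<notin> V1" using nV True by simp
      next
        show "i \<le> length xs" using True unfolding n_def by simp
      qed
      have 2: "n < Suc i + m"
      proof (rule block[OF blk])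
        fix t assume "Suc i \<le> t" "t < n" then show "xs ! t \<notin> V1" using nV by simp
      next
        show "n \<le> length xs" unfolding n_def by simp
      qed
      from 1 2 show ?thesis by simp
    next
      case False
      have "n < 0 + m"
      proof (rule block[OF blk])
        fix t assume "0 \<le> t" "t < n" then show "xs ! t \<notin> V1" using nV False by simp
      next
        show "n \<le> length xs" unfolding n_def by simp
      qed
      then show ?thesis by simp
    qed
    have "0 \<le> (\<Sum>t<n - 1. X {xs ! t, xs ! Suc t}) \<and> (\<Sum>t<n - 1. X {xs ! t, xs ! Suc t}) \<le> real (n - 1) * a + b"
      by (rule sum_bound_gen[OF g b]) auto
    moreover have "real (n - 1) * a \<le> 2 * real m * a"
    proof -
      have "real (n - 1) \<le> real (2 * m)" using L by (simp only: of_nat_le_iff)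
      then have "real (n - 1) \<le> 2 * real m" by simp
      then show ?thesis using a by (rule mult_right_mono)
    qed
    ultimately show ?thesis unfolding cp sum_path_edges n_def by auto
  next
    case False
    then obtain i r where Ie: "I = i # r" and rne: "r \<noteq> []" by (cases I) auto
    define j where "j = last r"
    have lastI: "last I = j" unfolding j_def Ie using rne by simp
    have cp: "canonical_path V1 xs = take (i + 1) xs @ drop j xs"
      using False unfolding canonical_path_def I_def[symmetric] n_def[symmetric] Let_def
      by (simp add: Ie j_def)
    have jr: "j \<in> set r" unfolding j_def using rne by simp
    have ij: "i < j" using sI jr unfolding Ie by auto
    have jmax: "t \<le> j" if "t \<in> set I" for t
    proof -
      have r': "r = butlast r @ [j]" unfolding j_def using rne by simp
      have "sorted_wrt (<) (i # butlast r @ [j])" using sI unfolding Ie by (subst (asm) r') simp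
      then have "\<forall>y\<in>set (i # butlast r). y < j" by (simp add: sorted_wrt_append)
      moreover have "t \<in> set (i # butlast r) \<or> t = j" using that unfolding Ie by (subst (asm) r') auto
      ultimately show ?thesis by auto
    qed
    have imin: "i \<le> t" if "t \<in> set I" for t using sI that unfolding Ie by auto
    have iV: "i < n" "xs ! i \<in> V1" using setI Ie by auto
    have jV: "j < n" "xs ! j \<in> V1" using setI jr Ie by auto
    have pre: "xs ! t \<notin> V1" if "t < i" for t using imin[of t] setI that iV by force
    have suf: "xs ! t \<notin> V1" if "j < t" "t < n" for t using jmax[of t] setI that by force
    define ys where "ys = take (i + 1) xs @ drop j xs"
    have lys: "length ys = Suc i + (n - j)" unfolding ys_def n_def using iV jV n_def by simp
    have ys1: "ys ! t = xs ! t" if "t \<le> i" for t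
      unfolding ys_def using that iV n_def by (simp add: nth_append)
    have ys2: "ys ! t = xs ! (t - Suc i + j)" if "i < t" "t < length ys" for t
    proof -
      have "ys ! t = drop j xs ! (t - Suc i)" unfolding ys_def using that iV n_def by (simp add: nth_append)
      also have "\<dots> = xs ! (j + (t - Suc i))" using jV n_def by (intro nth_drop) simp
      finally show ?thesis by (simp add: add.commute)
    qed
    have g: "0 \<le> X {ys ! t, ys ! Suc t} \<and> X {ys ! t, ys ! Suc t} \<le> a + (if t = i then b else 0)"
      if t: "t < length ys - 1" for t
    proof -
      consider "t < i" | "t = i" | "i < t" by linarith
      then show ?thesis
      proof cases
        case 1
        then have e: "{ys ! t, ys ! Suc t} = {xs ! t, xs ! Suc t}" using ys1 by simp
        have ne: "{xs ! t, xs ! Suc t} \<notin> E1_of V1" by (rule conjunct1[OF notE1[OF pre[OF 1]]])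
        have tn: "t < n - 1" using 1 iV by simp
        have "0 \<le> X {xs ! t, xs ! Suc t} \<and> X {xs ! t, xs ! Suc t} \<le> a" by (rule H0[OF edgeE[OF tn] ne])
        then show ?thesis unfolding e using b 1 by simp
      next
        case 2
        have e: "{ys ! t, ys ! Suc t} = {xs ! i, xs ! j}" using ys1[of i] ys2[of "Suc i"] t 2 by simp
        have "xs ! i \<noteq> xs ! j" proof
          assume "xs ! i = xs ! j"
          then have "i = j" using nth_eq_iff_index_eq[OF dist, of i j] jV(1) iV(1) unfolding n_def by blast
          then show False using ij by simp
        qed
        then have "{xs ! i, xs ! j} \<in> E1_of V1" by (intro inE1 iV(2) jV(2))
        then have "0 \<le> X {xs ! i, xs ! j} \<and> X {xs ! i, xs ! j} \<le> b" by (rule H1)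
        then show ?thesis unfolding e using a 2 by simp
      next
        case 3
        define r0 where "r0 = t - Suc i + j"
        have a1: "ys ! t = xs ! r0" using ys2[of t] 3 t unfolding r0_def by simp
        have "Suc t - Suc i + j = Suc r0" unfolding r0_def using 3 by simp
        then have a2: "ys ! Suc t = xs ! Suc r0" using ys2[of "Suc t"] 3 t by simp
        have e: "{ys ! t, ys ! Suc t} = {xs ! r0, xs ! Suc r0}" using a1 a2 by simp
        have r0n: "r0 < n - 1" using t 3 lys ij unfolding r0_def by linarith
        have jr0: "j < Suc r0" unfolding r0_def using 3 by simp
        have r0n': "Suc r0 < n" using r0n by simp
        have "xs ! Suc r0 \<notin> V1" by (rule suf[OF jr0 r0n'])
        then have ne: "{xs ! r0, xs ! Suc r0} \<notin> E1_of V1" by (rule conjunct2[OF notE1])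
        have "0 \<le> X {xs ! r0, xs ! Suc r0} \<and> X {xs ! r0, xs ! Suc r0} \<le> a" by (rule H0[OF edgeE[OF r0n] ne])
        then show ?thesis unfolding e using b 3 by simp
      qed
    qed
    have L1: "i < 0 + m"
    proof (rule block[OF blk])
      fix t assume "0 \<le> t" "t < i" then show "xs ! t \<notin> V1" by (intro pre)
    next
      show "i \<le> length xs" using iV(1) unfolding n_def by simp
    qed
    have L2: "n < Suc j + m"
    proof (rule block[OF blk])
      fix t assume "Suc j \<le> t" "t < n" then show "xs ! t \<notin> V1" using suf[of t] by simp
    next
      show "n \<le> length xs" unfolding n_def by simp
    qed
    have L: "length ys - 1 \<le> 2 * m" using L1 L2 lys by simp
    have "0 \<le> (\<Sum>t<length ys - 1. X {ys ! t, ys ! Suc t}) \<and> (\<Sum>t<length ys - 1. X {ys ! t, ys ! Suc t}) \<le> real (length ys - 1) * a + b"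
      by (rule sum_bound_gen[OF g b]) auto
    moreover have "real (length ys - 1) * a \<le> 2 * real m * a"
    proof -
      have "real (length ys - 1) \<le> real (2 * m)" using L by (simp only: of_nat_le_iff)
      then have "real (length ys - 1) \<le> 2 * real m" by simp
      then show ?thesis using a by (rule mult_right_mono)
    qed
    ultimately show ?thesis unfolding cp sum_path_edges ys_def[symmetric] by auto
  qed
qed



lemma final_arith:
  fixes K s Lam L2 M \<epsilon> :: real
  assumes K: "K \<ge> 1" and s: "s \<ge> 1" and Lam: "Lam \<ge> 1" and L2: "0 \<le> L2" "L2 \<le> 2 * Lam"
    and M: "0 \<le> M" "M \<le> 3 * K * Lam + 1" and e: "\<epsilon> > 0"
  shows "2 * M * (2 * (1 / (\<epsilon> / 2) * L2)) + 2 * (2 * sqrt 2 * K * s / (\<epsilon> / 2) * Lam)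
     \<le> 100 * K * s * Lam\<^sup>2 / \<epsilon>"
proof -
  have s2: "sqrt 2 \<le> 3/2" by (rule real_le_lsqrt) (auto simp: power2_eq_square)
  have "M * L2 \<le> (3 * K * Lam + 1) * (2 * Lam)" using M L2 by (intro mult_mono) auto
  also have "\<dots> = 6 * K * Lam\<^sup>2 + 2 * Lam" by (simp add: algebra_simps power2_eq_square)
  also have "2 * Lam \<le> 2 * K * Lam\<^sup>2"
  proof -
    have "Lam \<le> Lam * Lam" using Lam by (simp add: mult_le_cancel_left1)
    also have "\<dots> \<le> K * (Lam * Lam)" using K Lam by (simp add: mult_le_cancel_right1)
    finally show ?thesis by (simp add: power2_eq_square)
  qed
  finally have A: "M * L2 \<le> 8 * K * Lam\<^sup>2" by simp
  have "0 \<le> 8 * K * Lam\<^sup>2" using K by simp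
  then have "8 * K * Lam\<^sup>2 * 1 \<le> 8 * K * Lam\<^sup>2 * s" using s by (intro mult_left_mono) auto
  with A have A': "M * L2 \<le> 8 * K * s * Lam\<^sup>2" by (simp add: algebra_simps)
  have "sqrt 2 * K * s * Lam \<le> 3/2 * K * s * Lam" using s2 K s Lam by (intro mult_right_mono) auto
  also have "\<dots> \<le> 3/2 * K * s * Lam\<^sup>2" using K s Lam by (simp add: power2_eq_square)
  finally have B: "sqrt 2 * K * s * Lam \<le> 3/2 * K * s * Lam\<^sup>2" .
  have "2 * M * (2 * (1 / (\<epsilon> / 2) * L2)) + 2 * (2 * sqrt 2 * K * s / (\<epsilon> / 2) * Lam)
      = (8 * (M * L2) + 8 * (sqrt 2 * K * s * Lam)) / \<epsilon>" using e by (simp add: field_simps)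
  also have "\<dots> \<le> (8 * (8 * K * s * Lam\<^sup>2) + 8 * (3/2 * K * s * Lam\<^sup>2)) / \<epsilon>"
    using A' B e by (intro divide_right_mono) auto
  also have "\<dots> \<le> 100 * K * s * Lam\<^sup>2 / \<epsilon>"
    using e K s by (intro divide_right_mono) auto
  finally show ?thesis .
qed

lemma isqrt_sq: "isqrt (k^2) = k"
  unfolding isqrt_def by simp

lemma card_pairs_le:
  assumes "finite A" shows "card ((\<lambda>(u,v). {u,v}) ` (A \<times> A)) \<le> card A ^ 2"
  using card_image_le[of "A \<times> A" "\<lambda>(u,v). {u,v}"] assms
  by (simp add: card_cartesian_product power2_eq_square)

lemma E_sub:
  assumes sg: "simple_graph V E" shows "E \<subseteq> (\<lambda>(u,v). {u,v}) ` (V \<times> V)"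
proof
  fix e assume e: "e \<in> E"
  then have eV: "e \<subseteq> V" and "card e = 2" using sg unfolding simple_graph_def by auto
  then obtain x y where xy: "e = {x,y}" unfolding card_2_iff by blast
  then have "x \<in> V" "y \<in> V" using eV by auto
  then show "e \<in> (\<lambda>(u,v). {u,v}) ` (V \<times> V)" unfolding xy by (intro image_eqI[where x="(x,y)"]) auto
qed

lemma E1_sub: "E1_of V1 \<subseteq> (\<lambda>(u,v). {u,v}) ` (V1 \<times> V1)"
  unfolding E1_of_def by auto

lemma comp_meas: "(\<lambda>X. X e) \<in> borel_measurable (PiM I (\<lambda>e. Lap (mu e) (sg e)))"
proof (cases "e \<in> I")
  case True
  have "(\<lambda>X. X e) \<in> measurable (PiM I (\<lambda>e. Lap (mu e) (sg e))) (Lap (mu e) (sg e))"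
    by (rule measurable_component_singleton[OF True])
  then show ?thesis using measurable_cong_sets[OF refl sets_Lap] by blast
next
  case False
  have "\<And>X. X \<in> space (PiM I (\<lambda>e. Lap (mu e) (sg e))) \<Longrightarrow> X e = undefined"
    using False by (auto simp: space_PiM PiE_def extensional_def)
  then show ?thesis by (subst measurable_cong[where g="\<lambda>_. undefined"]) auto
qed

lemma sum_list_meas:
  fixes M :: "('b \<Rightarrow> real) measure"
  assumes "\<And>e. (\<lambda>X. X e) \<in> borel_measurable M"
  shows "(\<lambda>X. sum_list (map X es)) \<in> borel_measurable M"
proof (induction es)
  case Nil then show ?case by simp
next
  case (Cons e es) then show ?case using borel_measurable_add[OF assms[of e] Cons.IH] by simp
qed

lemma wdiff: "w_out V E w V1 X e - w_bar V E w V1 e = X e"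
  unfolding w_out_def w_bar_def by simp

lemma nm_eq: "noise_measure V E \<epsilon> \<delta> \<gamma> V1 = PiM (E0_of E V1 \<union> E1_of V1)
   (\<lambda>e. Lap (if e \<in> E1_of V1 then mu1 (card V) \<epsilon> \<delta> \<gamma> else mu0 (card V) \<epsilon> \<gamma>)
             (if e \<in> E1_of V1 then sigma1 (card V) \<epsilon> \<delta> else sigma0 \<epsilon>))"
  unfolding noise_measure_def by (intro PiM_cong) auto


lemma good_V1:
  fixes V :: "nat set" and E :: "nat set set" and w :: "nat set \<Rightarrow> real" and \<epsilon> \<delta> \<gamma> :: real
    and P :: "nat \<Rightarrow> nat \<Rightarrow> nat list" and V1 :: "nat set" and k m :: nat
  assumes sg: "simple_graph V E" and nk: "card V = k^2" and k2: "k \<ge> 2"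
    and V1: "V1 \<subseteq> V" "card V1 = k"
    and e0: "0 < \<epsilon>" and d0: "0 < \<delta>" and d1: "\<delta> \<le> exp (-1)" and g0: "0 < \<gamma>" and g1: "\<gamma> < 1"
    and sp: "\<forall>u\<in>V. \<forall>v\<in>V. is_shortest_path V E w (P u v) u v"
    and good: "goodV V P m V1"
    and mle: "real m \<le> 3 * real k * ln (real (card V) / \<gamma>) + 1"
  shows "1 - 2 * \<gamma> \<le> measure (noise_measure V E \<epsilon> \<delta> \<gamma> V1)
          {X \<in> space (noise_measure V E \<epsilon> \<delta> \<gamma> V1).
             \<forall>u\<in>V. \<forall>v\<in>V.
               \<bar>\<Sum>e\<leftarrow>path_edges (canonical_path V1 (P u v)).
                   w_out V E w V1 X e - w_bar V E w V1 e\<bar>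
               \<le> 100 * sqrt (real (card V)) * sqrt (ln (1 / \<delta>)) * (ln (real (card V) / \<gamma>))\<^sup>2 / \<epsilon>}"
proof -
  define n where "n = card V"
  have finV: "finite V" using sg unfolding simple_graph_def by simp
  have finV1: "finite V1" using V1 finV finite_subset by blast
  have nr: "real n = real k ^ 2" using nk n_def by simp
  have sqn: "sqrt (real n) = real k" using nr by simp
  have "(2::real) ^ 2 \<le> real k ^ 2" using k2 by (intro power_mono) auto
  then have n4: "real n \<ge> 4" using nr by simp
  have npos: "real n > 0" using n4 by simp
  define Lam where "Lam = ln (real n / \<gamma>)"
  define L2 where "L2 = ln (real n ^ 2 / \<gamma>)"
  define l where "l = ln (1 / \<delta>)"
  have lng: "ln \<gamma> < 0" using g0 g1 by simp
  have lnn: "ln (real n) \<ge> 0" using n4 by simp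
  have Lam_eq: "Lam = ln (real n) - ln \<gamma>" unfolding Lam_def using npos g0 by (simp add: ln_div)
  have L2_eq: "L2 = 2 * ln (real n) - ln \<gamma>" unfolding L2_def using npos g0 by (simp add: ln_div ln_realpow)
  have Lam1: "Lam \<ge> 1"
  proof -
    have "real n \<le> real n / \<gamma>" using npos g0 g1 by (simp add: le_divide_eq)
    then have "exp 1 \<le> real n / \<gamma>" using exp_le n4 by linarith
    then have "ln (exp 1) \<le> ln (real n / \<gamma>)" using npos g0 by (subst ln_le_cancel_iff) auto
    then show ?thesis unfolding Lam_def by simp
  qed
  have L2a: "0 \<le> L2" "L2 \<le> 2 * Lam" using L2_eq Lam_eq lng lnn by auto
  have l1: "l \<ge> 1"
  proof -
    have "exp (-1) = 1 / exp (1::real)" by (simp add: exp_minus inverse_eq_divide)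
    then have "\<delta> * exp 1 \<le> 1" using d1 by (simp add: le_divide_eq)
    then have "exp 1 \<le> 1 / \<delta>" using d0 by (simp add: le_divide_eq mult.commute)
    then have "ln (exp 1) \<le> ln (1 / \<delta>)" using d0 by (subst ln_le_cancel_iff) auto
    then show ?thesis unfolding l_def by simp
  qed
  have s1': "sqrt l \<ge> 1" using l1 by simp
  define E1 where "E1 = E1_of V1"
  define I where "I = E0_of E V1 \<union> E1"
  define mu where "mu = (\<lambda>e. if e \<in> E1 then mu1 n \<epsilon> \<delta> \<gamma> else mu0 n \<epsilon> \<gamma>)"
  define sgm where "sgm = (\<lambda>e. if e \<in> E1 then sigma1 n \<epsilon> \<delta> else sigma0 \<epsilon>)"
  define M where "M = PiM I (\<lambda>e. Lap (mu e) (sgm e))"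
  have Meq: "noise_measure V E \<epsilon> \<delta> \<gamma> V1 = M"
    unfolding M_def I_def mu_def sgm_def E1_def n_def by (rule nm_eq)
  have s1: "sigma1 n \<epsilon> \<delta> > 0" unfolding sigma1_def using npos e0 l1 l_def by simp
  have s0: "sigma0 \<epsilon> > 0" unfolding sigma0_def using e0 by simp
  have mu1_eq: "mu1 n \<epsilon> \<delta> \<gamma> = sigma1 n \<epsilon> \<delta> * Lam" unfolding mu1_def Lam_def ..
  have mu0_eq: "mu0 n \<epsilon> \<gamma> = sigma0 \<epsilon> * L2" unfolding mu0_def L2_def ..
  have m1p: "mu1 n \<epsilon> \<delta> \<gamma> \<ge> 0" unfolding mu1_eq using s1 Lam1 by simp
  have m0p: "mu0 n \<epsilon> \<gamma> \<ge> 0" unfolding mu0_eq using s0 L2a by simp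
  have sgpos: "\<And>e. sgm e > 0" using s0 s1 unfolding sgm_def by auto
  have mupos: "\<And>e. mu e \<ge> 0" using m0p m1p unfolding mu_def by auto
  have finE: "finite E" by (rule finite_subset[OF E_sub[OF sg]]) (use finV in auto)
  have cardE: "card E \<le> n ^ 2"
    using card_mono[OF finite_imageI E_sub[OF sg]] card_pairs_le[OF finV] finV unfolding n_def by force
  have finE1: "finite E1" unfolding E1_def by (rule finite_subset[OF E1_sub]) (use finV1 in auto)
  have cardE1: "card E1 \<le> n"
    using card_mono[OF finite_imageI E1_sub] card_pairs_le[OF finV1] finV1 V1 nk unfolding n_def E1_def by force
  have finI: "finite I" unfolding I_def E0_of_def using finE finE1 by simp
  have ps: "prob_space M" unfolding M_def using sgpos by (intro prob_space_PiM prob_space_Lap) auto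
  interpret M: prob_space M by (rule ps)
  have cm[measurable]: "\<And>e. (\<lambda>X. X e) \<in> borel_measurable M" unfolding M_def by (rule comp_meas)
  define BadN where "BadN = {X \<in> space M. \<exists>e\<in>I. X e \<notin> {0..2 * mu e}}"
  have BadN_le: "measure M BadN \<le> (\<Sum>e\<in>I. exp (- mu e / sgm e))"
    unfolding BadN_def M_def by (rule noise_bad[OF finI sgpos mupos])
  have exp0: "exp (- (mu0 n \<epsilon> \<gamma> / sigma0 \<epsilon>)) = \<gamma> / real n ^ 2"
  proof -
    have "- (mu0 n \<epsilon> \<gamma> / sigma0 \<epsilon>) = - ln (real n ^ 2 / \<gamma>)" unfolding mu0_eq L2_def using s0 by simp
    then show ?thesis using npos g0 by (simp add: exp_minus)
  qed
  have exp1: "exp (- (mu1 n \<epsilon> \<delta> \<gamma> / sigma1 n \<epsilon> \<delta>)) = \<gamma> / real n"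
  proof -
    have "- (mu1 n \<epsilon> \<delta> \<gamma> / sigma1 n \<epsilon> \<delta>) = - ln (real n / \<gamma>)" unfolding mu1_eq Lam_def using s1 by simp
    then show ?thesis using npos g0 by (simp add: exp_minus)
  qed
  have Isplit: "I = (E - E1) \<union> E1" unfolding I_def E0_of_def E1_def by simp
  have "(\<Sum>e\<in>I. exp (- mu e / sgm e)) = (\<Sum>e\<in>E - E1. exp (- mu e / sgm e)) + (\<Sum>e\<in>E1. exp (- mu e / sgm e))"
    unfolding Isplit by (rule sum.union_disjoint) (use finE finE1 in auto)
  also have "(\<Sum>e\<in>E - E1. exp (- mu e / sgm e)) = (\<Sum>e\<in>E - E1. \<gamma> / real n ^ 2)"
    by (rule sum.cong) (auto simp: mu_def sgm_def exp0)
  also have "(\<Sum>e\<in>E1. exp (- mu e / sgm e)) = (\<Sum>e\<in>E1. \<gamma> / real n)"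
    by (rule sum.cong) (auto simp: mu_def sgm_def exp1)
  also have "(\<Sum>e\<in>E - E1. \<gamma> / real n ^ 2) \<le> \<gamma>"
  proof -
    have "card (E - E1) \<le> n ^ 2" using card_mono[OF finE, of "E - E1"] cardE by auto
    then have "real (card (E - E1)) \<le> real (n ^ 2)" by (simp only: of_nat_le_iff)
    then have "real (card (E - E1)) \<le> real n ^ 2" by simp
    then have "real (card (E - E1)) * (\<gamma> / real n ^ 2) \<le> real n ^ 2 * (\<gamma> / real n ^ 2)"
      using g0 by (intro mult_right_mono) auto
    then show ?thesis using npos by simp
  qed
  also have "(\<Sum>e\<in>E1. \<gamma> / real n) \<le> \<gamma>"
  proof -
    have "real (card E1) \<le> real n" using cardE1 by simp
    then have "real (card E1) * (\<gamma> / real n) \<le> real n * (\<gamma> / real n)"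
      using g0 by (intro mult_right_mono) auto
    then show ?thesis using npos by simp
  qed
  finally have BadN2: "measure M BadN \<le> 2 * \<gamma>" using BadN_le by simp
  have BadN_sets: "BadN \<in> sets M" unfolding BadN_def using finI by measurable
  define B where "B = 100 * sqrt (real (card V)) * sqrt (ln (1 / \<delta>)) * (ln (real (card V) / \<gamma>))\<^sup>2 / \<epsilon>"
  define Ev where "Ev = {X \<in> space M. \<forall>u\<in>V. \<forall>v\<in>V.
               \<bar>\<Sum>e\<leftarrow>path_edges (canonical_path V1 (P u v)). w_out V E w V1 X e - w_bar V E w V1 e\<bar> \<le> B}"
  have Ev_eq: "Ev = {X \<in> space M. \<forall>u\<in>V. \<forall>v\<in>V. \<bar>sum_list (map X (path_edges (canonical_path V1 (P u v))))\<bar> \<le> B}"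
    unfolding Ev_def by (simp only: wdiff)
  have slm[measurable]: "\<And>es. (\<lambda>X. sum_list (map X es)) \<in> borel_measurable M"
    by (rule sum_list_meas[OF cm])
  have Ev_sets: "Ev \<in> sets M" unfolding Ev_eq using finV by measurable
  have B_eq: "B = 100 * real k * sqrt l * Lam\<^sup>2 / \<epsilon>"
    unfolding B_def Lam_def l_def n_def[symmetric] sqn ..
  have bnd: "2 * real m * (2 * mu0 n \<epsilon> \<gamma>) + 2 * mu1 n \<epsilon> \<delta> \<gamma> \<le> B"
  proof -
    have "2 * real m * (2 * mu0 n \<epsilon> \<gamma>) + 2 * mu1 n \<epsilon> \<delta> \<gamma>
       = 2 * real m * (2 * (1 / (\<epsilon> / 2) * L2)) + 2 * (2 * sqrt 2 * real k * sqrt l / (\<epsilon> / 2) * Lam)"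
      unfolding mu0_def sigma0_def mu1_def sigma1_def L2_def Lam_def l_def sqn ..
    also have "\<dots> \<le> B" unfolding B_eq
      by (rule final_arith) (use k2 s1' Lam1 L2a mle e0 Lam_def n_def in auto)
    finally show ?thesis .
  qed
  have sub: "space M - BadN \<subseteq> Ev"
  proof
    fix X assume X: "X \<in> space M - BadN"
    then have Xs: "X \<in> space M" and Xb: "\<And>e. e \<in> I \<Longrightarrow> 0 \<le> X e \<and> X e \<le> 2 * mu e"
      unfolding BadN_def by auto
    have "\<forall>u\<in>V. \<forall>v\<in>V. \<bar>sum_list (map X (path_edges (canonical_path V1 (P u v))))\<bar> \<le> B"
    proof (intro ballI)
      fix u v assume u: "u \<in> V" and v: "v \<in> V"
      have pth: "is_path V E (P u v) u v" using sp u v unfolding is_shortest_path_def by auto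
      then have dist: "distinct (P u v)" and edg: "\<forall>e\<in>set (path_edges (P u v)). e \<in> E"
        unfolding is_path_def by auto
      have blk: "\<forall>s. s + m \<le> length (P u v) \<longrightarrow> (\<exists>t. s \<le> t \<and> t < s + m \<and> P u v ! t \<in> V1)"
        using good u v unfolding goodV_def by auto
      have H0: "0 \<le> X e \<and> X e \<le> 2 * mu0 n \<epsilon> \<gamma>" if "e \<in> E" "e \<notin> E1_of V1" for e
        using Xb[of e] that unfolding I_def E0_of_def mu_def E1_def by auto
      have H1: "0 \<le> X e \<and> X e \<le> 2 * mu1 n \<epsilon> \<delta> \<gamma>" if "e \<in> E1_of V1" for e
        using Xb[of e] that unfolding I_def mu_def E1_def by auto
      have S: "0 \<le> sum_list (map X (path_edges (canonical_path V1 (P u v))))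
        \<and> sum_list (map X (path_edges (canonical_path V1 (P u v)))) \<le> 2 * real m * (2 * mu0 n \<epsilon> \<gamma>) + 2 * mu1 n \<epsilon> \<delta> \<gamma>"
        by (rule path_sum_bound[OF dist edg H0 H1 blk]) (use m0p m1p in auto)
      then show "\<bar>sum_list (map X (path_edges (canonical_path V1 (P u v))))\<bar> \<le> B" using bnd by linarith
    qed
    then show "X \<in> Ev" unfolding Ev_eq using Xs by blast
  qed
  have "measure M (space M - BadN) \<le> measure M Ev" by (rule M.finite_measure_mono[OF sub Ev_sets])
  moreover have "measure M (space M - BadN) = 1 - measure M BadN" by (rule M.prob_compl[OF BadN_sets])
  ultimately have "1 - 2 * \<gamma> \<le> measure M Ev" using BadN2 by linarith
  then show ?thesis unfolding Meq Ev_def B_def .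
qed


lemma main_fixed:
  fixes V :: "nat set" and E :: "nat set set" and w :: "nat set \<Rightarrow> real" and \<epsilon> \<delta> \<gamma> :: real
    and P :: "nat \<Rightarrow> nat \<Rightarrow> nat list"
  assumes sg: "simple_graph V E" and cV: "card V \<ge> 2" and sq: "\<exists>k. card V = k ^ 2"
    and e0: "0 < \<epsilon>" and d0: "0 < \<delta>" and d1: "\<delta> \<le> exp (-1)" and g0: "0 < \<gamma>" and g1: "\<gamma> < 1"
    and sp: "\<forall>u\<in>V. \<forall>v\<in>V. is_shortest_path V E w (P u v) u v"
  shows "(\<Sum>V1\<in>{S. S \<subseteq> V \<and> card S = isqrt (card V)}.
        measure (noise_measure V E \<epsilon> \<delta> \<gamma> V1)
          {X \<in> space (noise_measure V E \<epsilon> \<delta> \<gamma> V1).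
             \<forall>u\<in>V. \<forall>v\<in>V.
               \<bar>\<Sum>e\<leftarrow>path_edges (canonical_path V1 (P u v)).
                   w_out V E w V1 X e - w_bar V E w V1 e\<bar>
               \<le> 100 * sqrt (real (card V)) * sqrt (ln (1 / \<delta>)) * (ln (real (card V) / \<gamma>))\<^sup>2 / \<epsilon>})
     / real (card {S. S \<subseteq> V \<and> card S = isqrt (card V)})
     \<ge> 1 - 4 * \<gamma>"
proof -
  obtain k where nk: "card V = k ^ 2" using sq by blast
  define n where "n = card V"
  have finV: "finite V" using sg unfolding simple_graph_def by simp
  have k2: "k \<ge> 2"
  proof (rule ccontr)
    assume "\<not> 2 \<le> k" then have "k \<le> 1" by simp
    then have "k ^ 2 \<le> 1 ^ 2" by (intro power_mono) auto
    then show False using nk cV by simp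
  qed
  have isq: "isqrt (card V) = k" unfolding nk by (rule isqrt_sq)
  have nr: "real n = real k ^ 2" using nk n_def by simp
  have kpos: "real k > 0" using k2 by simp
  have npos: "real n > 0" using nr kpos by simp
  have "k * 1 \<le> k * k" using k2 by (intro mult_le_mono2) auto
  then have kn: "k \<le> n" using nk n_def by (simp add: power2_eq_square)
  define B where "B = 100 * sqrt (real (card V)) * sqrt (ln (1 / \<delta>)) * (ln (real (card V) / \<gamma>))\<^sup>2 / \<epsilon>"
  define \<Omega> where "\<Omega> = {S. S \<subseteq> V \<and> card S = k}"
  define f where "f = (\<lambda>V1. measure (noise_measure V E \<epsilon> \<delta> \<gamma> V1)
          {X \<in> space (noise_measure V E \<epsilon> \<delta> \<gamma> V1).
             \<forall>u\<in>V. \<forall>v\<in>V.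
               \<bar>\<Sum>e\<leftarrow>path_edges (canonical_path V1 (P u v)).
                   w_out V E w V1 X e - w_bar V E w V1 e\<bar> \<le> B})"
  have fin\<Omega>: "finite \<Omega>" unfolding \<Omega>_def by (rule finite_subset[of _ "Pow V"]) (use finV in auto)
  have card\<Omega>: "card \<Omega> = n choose k" unfolding \<Omega>_def n_def by (rule n_subsets[OF finV])
  have Npos: "real (card \<Omega>) > 0" using kn card\<Omega> by simp
  have fnn: "\<And>V1. 0 \<le> f V1" unfolding f_def by (rule measure_nonneg)
  have main: "1 - 4 * \<gamma> \<le> (\<Sum>V1\<in>\<Omega>. f V1) / real (card \<Omega>)"
  proof (cases "\<gamma> \<ge> 1/4")
    case True
    have "0 \<le> (\<Sum>V1\<in>\<Omega>. f V1) / real (card \<Omega>)" by (intro divide_nonneg_nonneg sum_nonneg fnn) auto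
    then show ?thesis using True by linarith
  next
    case False
    then have g4: "\<gamma> < 1/4" by simp
    define L3 where "L3 = ln (real n ^ 3 / \<gamma>)"
    define Lam where "Lam = ln (real n / \<gamma>)"
    have lng: "ln \<gamma> < 0" using g0 g1 by simp
    have "(2::real) ^ 2 \<le> real k ^ 2" using k2 by (intro power_mono) auto
    then have "real n \<ge> 1" using nr by simp
    then have lnn: "ln (real n) \<ge> 0" by simp
    have L3_eq: "L3 = 3 * ln (real n) - ln \<gamma>" unfolding L3_def using npos g0 by (simp add: ln_div ln_realpow)
    have Lam_eq: "Lam = ln (real n) - ln \<gamma>" unfolding Lam_def using npos g0 by (simp add: ln_div)
    have L3pos: "L3 > 0" using L3_eq lng lnn by simp
    have L3le: "L3 \<le> 3 * Lam" using L3_eq Lam_eq lng by simp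
    define m where "m = nat \<lceil>real k * L3\<rceil>"
    have m_ge: "real k * L3 \<le> real m" unfolding m_def by (rule real_nat_ceiling_ge)
    have "0 \<le> real k * L3" using kpos L3pos by simp
    then have m_le: "real m \<le> real k * L3 + 1" unfolding m_def by (simp add: of_nat_nat)
    have "0 < real k * L3" using kpos L3pos by simp
    then have "real m > 0" using m_ge by linarith
    then have m1: "m \<ge> 1" by simp
    have mle: "real m \<le> 3 * real k * ln (real (card V) / \<gamma>) + 1"
    proof -
      have "real k * L3 \<le> real k * (3 * Lam)" using L3le kpos by simp
      then show ?thesis using m_le unfolding Lam_def n_def by simp
    qed
    have PV: "\<And>u v. u \<in> V \<Longrightarrow> v \<in> V \<Longrightarrow> distinct (P u v) \<and> set (P u v) \<subseteq> V"
      using sp unfolding is_shortest_path_def is_path_def by blast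
    define Bad where "Bad = {V1. (V1 \<subseteq> V \<and> card V1 = k) \<and> \<not> goodV V P m V1}"
    have cb: "card Bad \<le> n ^ 3 * ((n - m) choose k)" unfolding Bad_def n_def by (rule count_bad[OF finV PV m1])
    have binb: "real ((n - m) choose k) \<le> (1 - real k / real n)^m * real (n choose k)"
      by (rule binom_ratio) (use kn npos in auto)
    have q0: "0 \<le> 1 - real k / real n" using kn npos by (simp add: field_simps)
    have "(1 - real k / real n)^m \<le> exp (- (real k / real n))^m"
      using q0 exp_ge_add_one_self[of "- (real k / real n)"] by (intro power_mono) auto
    also have "\<dots> = exp (real m * (- (real k / real n)))" by (rule exp_of_nat_mult[symmetric])
    also have "\<dots> \<le> exp (- L3)"
    proof -
      have "real k / real n = 1 / real k" using nr kpos by (simp add: power2_eq_square)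
      moreover have "L3 \<le> real m / real k" using m_ge kpos by (simp add: le_divide_eq mult.commute)
      ultimately show ?thesis by simp
    qed
    also have "\<dots> = \<gamma> / real n ^ 3"
      unfolding L3_def using npos g0 by (simp add: exp_minus)
    finally have qb: "(1 - real k / real n)^m \<le> \<gamma> / real n ^ 3" .
    have "real (card Bad) \<le> real (n ^ 3 * ((n - m) choose k))"
      using cb by (simp only: of_nat_le_iff)
    also have "\<dots> = real n ^ 3 * real ((n - m) choose k)" by simp
    also have "\<dots> \<le> real n ^ 3 * ((1 - real k / real n)^m * real (n choose k))"
      using binb by (intro mult_left_mono) auto
    also have "\<dots> \<le> real n ^ 3 * (\<gamma> / real n ^ 3 * real (n choose k))"
      using qb by (intro mult_left_mono mult_right_mono) auto
    also have "\<dots> = \<gamma> * real (card \<Omega>)" using npos card\<Omega> by simp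
    finally have cbr: "real (card Bad) \<le> \<gamma> * real (card \<Omega>)" .
    have BadO: "Bad \<subseteq> \<Omega>" unfolding Bad_def \<Omega>_def by auto
    have fgood: "1 - 2 * \<gamma> \<le> f V1" if "V1 \<in> \<Omega> - Bad" for V1
    proof -
      have V1: "V1 \<subseteq> V" "card V1 = k" and gd: "goodV V P m V1" using that unfolding \<Omega>_def Bad_def by auto
      show ?thesis unfolding f_def B_def
        by (rule good_V1[OF sg nk k2 V1 e0 d0 d1 g0 g1 sp gd mle])
    qed
    have "(\<Sum>V1\<in>\<Omega>. f V1) = (\<Sum>V1\<in>\<Omega> - Bad. f V1) + (\<Sum>V1\<in>Bad. f V1)"
      by (rule sum.subset_diff[OF BadO fin\<Omega>])
    also have "\<dots> \<ge> (\<Sum>V1\<in>\<Omega> - Bad. f V1)" using fnn by (simp add: sum_nonneg)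
    finally have s1: "(\<Sum>V1\<in>\<Omega> - Bad. f V1) \<le> (\<Sum>V1\<in>\<Omega>. f V1)" .
    have s2: "real (card (\<Omega> - Bad)) * (1 - 2 * \<gamma>) \<le> (\<Sum>V1\<in>\<Omega> - Bad. f V1)"
      using sum_bounded_below[of "\<Omega> - Bad" "1 - 2 * \<gamma>" f] fgood by simp
    have cBad: "card Bad \<le> card \<Omega>" by (rule card_mono[OF fin\<Omega> BadO])
    have "real (card (\<Omega> - Bad)) = real (card \<Omega>) - real (card Bad)"
      using card_Diff_subset[OF finite_subset[OF BadO fin\<Omega>] BadO] cBad by (simp add: of_nat_diff)
    then have c3: "real (card (\<Omega> - Bad)) \<ge> (1 - \<gamma>) * real (card \<Omega>)" using cbr by (simp add: algebra_simps)
    have "(1 - \<gamma>) * real (card \<Omega>) * (1 - 2 * \<gamma>) \<le> real (card (\<Omega> - Bad)) * (1 - 2 * \<gamma>)"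
      using c3 g4 by (intro mult_right_mono) auto
    moreover have "(1 - 4 * \<gamma>) * real (card \<Omega>) \<le> (1 - \<gamma>) * real (card \<Omega>) * (1 - 2 * \<gamma>)"
    proof -
      have "(1 - 4 * \<gamma>) \<le> (1 - \<gamma>) * (1 - 2 * \<gamma>)" using g0 by (simp add: algebra_simps power2_eq_square)
      then have "(1 - 4 * \<gamma>) * real (card \<Omega>) \<le> ((1 - \<gamma>) * (1 - 2 * \<gamma>)) * real (card \<Omega>)"
        using Npos by (intro mult_right_mono) auto
      then show ?thesis by (simp add: algebra_simps)
    qed
    ultimately have "(1 - 4 * \<gamma>) * real (card \<Omega>) \<le> (\<Sum>V1\<in>\<Omega>. f V1)" using s1 s2 by linarith
    then show ?thesis using Npos by (simp add: le_divide_eq)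
  qed
  then show ?thesis unfolding isq \<Omega>_def f_def B_def .
qed

theorem mainTheorem3:
  "\<exists>C>0. \<forall>(V :: nat set) E w \<epsilon> \<delta> \<gamma> P.
     simple_graph V E \<and> connected_graph V E \<and> card V \<ge> 2 \<and>
     (\<exists>k. card V = k ^ 2) \<and> (\<forall>e\<in>E. w e \<ge> 0) \<and>
     0 < \<epsilon> \<and> \<epsilon> < 2 \<and> 0 < \<delta> \<and> \<delta> \<le> exp (-1) \<and> 0 < \<gamma> \<and> \<gamma> < 1 \<and>
     (\<forall>u\<in>V. \<forall>v\<in>V. is_shortest_path V E w (P u v) u v)
     \<longrightarrow>
     (\<Sum>V1\<in>{S. S \<subseteq> V \<and> card S = isqrt (card V)}.
        measure (noise_measure V E \<epsilon> \<delta> \<gamma> V1)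
          {X \<in> space (noise_measure V E \<epsilon> \<delta> \<gamma> V1).
             \<forall>u\<in>V. \<forall>v\<in>V.
               \<bar>\<Sum>e\<leftarrow>path_edges (canonical_path V1 (P u v)).
                   w_out V E w V1 X e - w_bar V E w V1 e\<bar>
               \<le> C * sqrt (real (card V)) * sqrt (ln (1 / \<delta>)) * (ln (real (card V) / \<gamma>))\<^sup>2 / \<epsilon>})
     / real (card {S. S \<subseteq> V \<and> card S = isqrt (card V)})
     \<ge> 1 - 4 * \<gamma>"
proof (rule exI[of _ 100], intro conjI allI impI)
  show "(100::real) > 0" by simp
next
  fix V :: "nat set" and E :: "nat set set" and w :: "nat set \<Rightarrow> real" and \<epsilon> \<delta> \<gamma> :: real
    and P :: "nat \<Rightarrow> nat \<Rightarrow> nat list"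
  assume H: "simple_graph V E \<and> connected_graph V E \<and> card V \<ge> 2 \<and>
     (\<exists>k. card V = k ^ 2) \<and> (\<forall>e\<in>E. w e \<ge> 0) \<and>
     0 < \<epsilon> \<and> \<epsilon> < 2 \<and> 0 < \<delta> \<and> \<delta> \<le> exp (-1) \<and> 0 < \<gamma> \<and> \<gamma> < 1 \<and>
     (\<forall>u\<in>V. \<forall>v\<in>V. is_shortest_path V E w (P u v) u v)"
  then show "(\<Sum>V1\<in>{S. S \<subseteq> V \<and> card S = isqrt (card V)}.
        measure (noise_measure V E \<epsilon> \<delta> \<gamma> V1)
          {X \<in> space (noise_measure V E \<epsilon> \<delta> \<gamma> V1).
             \<forall>u\<in>V. \<forall>v\<in>V.
               \<bar>\<Sum>e\<leftarrow>path_edges (canonical_path V1 (P u v)).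
                   w_out V E w V1 X e - w_bar V E w V1 e\<bar>
               \<le> 100 * sqrt (real (card V)) * sqrt (ln (1 / \<delta>)) * (ln (real (card V) / \<gamma>))\<^sup>2 / \<epsilon>})
     / real (card {S. S \<subseteq> V \<and> card S = isqrt (card V)})
     \<ge> 1 - 4 * \<gamma>"
    by (intro main_fixed) auto
qed

end
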